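(* Let $a,b\in\mathbb{C}$ and suppose $\cdot_\lambda\cdot$ is a compatible left-symmetric conformal algebraic structure on $\mathcal{W}(a,b)=\mathbb{C}[\partial]L\oplus\mathbb{C}[\partial]W$ such that $\mathbb{C}[\partial]L$ is a left-symmetric conformal subalgebra. Let $c\in\mathbb{C}$ be such that $L_\lambda L=(\partial+\lambda+c)L$, and write $L_\lambda W=g_1(\lambda,\partial)L+g_2(\lambda,\partial)W$, $W_\lambda L=h_1(\lambda,\partial)L+h_2(\lambda,\partial)W$ with $g_i,h_i\in\mathbb{C}[\lambda,\partial]$. Then exactly one of the following holds: (A) $g_2(\lambda,\partial)=\partial+a\lambda+b$ and $h_2(\lambda,\partial)=0$; (B) $g_2(\lambda,\partial)=\partial+a\lambda+b+c$ and $h_2(\lambda,\partial)=c$, with $c\neq0$; (C) $g_2(\lambda,\partial)=\partial+(a-1)\lambda+b+c$ and $h_2(\lambda,\partial)=\partial+\lambda+c$.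
   Context: A conformal algebra is a $\mathbb{C}[\partial]$-module $R$ with a $\mathbb{C}$-bilinear map $R\times R\to R[\lambda]$, $(x,y)\mapsto x_\lambda y$, satisfying $(\partial x)_\lambda y=-\lambda\, x_\lambda y$ and $x_\lambda(\partial y)=(\partial+\lambda)\,x_\lambda y$. For $x,y\in R$, $y_{-\lambda-\partial}x$ means: write $y_\mu x=\sum_j \mu^j z_j$ and set $y_{-\lambda-\partial}x=\sum_j(-\lambda-\partial)^j z_j$. A left-symmetric conformal algebra is a conformal algebra with $(x_\lambda y)_{\lambda+\mu}z-x_\lambda(y_\mu z)=(y_\mu x)_{\lambda+\mu}z-y_\mu(x_\lambda z)$. A compatible left-symmetric conformal algebraic structure on a Lie conformal algebra $(R,[\cdot_\lambda\cdot])$ is a left-symmetric conformal product on the same $\mathbb{C}[\partial]$-module with $x_\lambda y-y_{-\lambda-\partial}x=[x_\lambda y]$ for all $x,y$. $\mathcal{W}(a,b)$ is the free $\mathbb{C}[\partial]$-module with basis $L,W$ and Lie conformal brackets $[L_\lambda L]=(\partial+2\lambda)L$, $[L_\lambda W]=(\partial+a\lambda+b)W$, $[W_\lambda W]=0$. "$\mathbb{C}[\partial]L$ is a left-symmetric conformal subalgebra" means $L_\lambda L\in(\mathbb{C}[\partial]L)[\lambda]$; in that case $L_\lambda L=(\partial+\lambda+c)L$ for some $c\in\mathbb{C}$ (every compatible left-symmetric conformal structure on the Virasoro conformal algebra $\mathbb{C}[\partial]L$, $[L_\lambda L]=(\partial+2\lambda)L$, has this form). *)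

theory Defs
  imports "HOL-Computational_Algebra.Polynomial" "HOL-Library.Product_Plus"
begin

text \<open>
  The free C[d]-module R = C[d]L + C[d]W is represented by pairs (p, q) of complex
  polynomials in d (coefficient of L, coefficient of W).
  R[lam] is represented by pairs of bivariate polynomials "complex poly poly":
  the outer variable is lam, the inner (coefficient) variable is d.
  R[lam, mu] is represented by pairs of "complex poly poly poly":
  outer variable lam, middle variable mu, inner variable d.
\<close>

type_synonym celt = "complex poly \<times> complex poly"
type_synonym celt1 = "complex poly poly \<times> complex poly poly"
type_synonym celt2 = "complex poly poly poly \<times> complex poly poly poly"

definition eL :: celt where "eL = (1, 0)"
definition eW :: celt where "eW = (0, 1)"

definition dR :: "celt \<Rightarrow> celt" where "dR x = ([:0, 1:] * fst x, [:0, 1:] * snd x)"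
definition smR :: "complex \<Rightarrow> celt \<Rightarrow> celt" where "smR c x = (smult c (fst x), smult c (snd x))"

definition lam1 :: "complex poly poly" where "lam1 = [:0, 1:]"
definition del1 :: "complex poly poly" where "del1 = [:[:0, 1:]:]"
definition cst1 :: "complex \<Rightarrow> complex poly poly" where "cst1 c = [:[:c:]:]"
definition sc1 :: "complex poly poly \<Rightarrow> celt1 \<Rightarrow> celt1" where "sc1 f u = (f * fst u, f * snd u)"

definition coef1 :: "celt1 \<Rightarrow> nat \<Rightarrow> celt" where "coef1 u j = (coeff (fst u) j, coeff (snd u) j)"
definition deg1 :: "celt1 \<Rightarrow> nat" where "deg1 u = max (degree (fst u)) (degree (snd u))"

definition is_conformal_product :: "(celt \<Rightarrow> celt \<Rightarrow> celt1) \<Rightarrow> bool" where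
  "is_conformal_product pr \<longleftrightarrow>
     (\<forall>x y z. pr (x + y) z = pr x z + pr y z) \<and>
     (\<forall>x y z. pr x (y + z) = pr x y + pr x z) \<and>
     (\<forall>c x y. pr (smR c x) y = sc1 (cst1 c) (pr x y)) \<and>
     (\<forall>c x y. pr x (smR c y) = sc1 (cst1 c) (pr x y)) \<and>
     (\<forall>x y. pr (dR x) y = sc1 (- lam1) (pr x y)) \<and>
     (\<forall>x y. pr x (dR y) = sc1 (del1 + lam1) (pr x y))"

text \<open>given u = y_mu x = sum_j mu^j z_j, this is y_{-lam-d} x = sum_j (-lam-d)^j z_j\<close>
definition subst_neg :: "celt1 \<Rightarrow> celt1" where
  "subst_neg u = (pcompose (fst u) (- lam1 - del1), pcompose (snd u) (- lam1 - del1))"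

definition lamT :: "complex poly poly poly" where "lamT = [:0, 1:]"
definition muT :: "complex poly poly poly" where "muT = [:[:0, 1:]:]"
definition sc2 :: "complex poly poly poly \<Rightarrow> celt2 \<Rightarrow> celt2" where "sc2 f v = (f * fst v, f * snd v)"

text \<open>embed P(nu, d) as P(lam, d), resp. as P(mu, d), resp. as P(lam+mu, d)\<close>
definition toL :: "complex poly poly \<Rightarrow> complex poly poly poly" where
  "toL P = map_poly (\<lambda>c. [:c:]) P"
definition toM :: "complex poly poly \<Rightarrow> complex poly poly poly" where
  "toM P = [:P:]"
definition toLM :: "complex poly poly \<Rightarrow> complex poly poly poly" where
  "toLM P = pcompose (toL P) (lamT + muT)"
definition map2 :: "(complex poly poly \<Rightarrow> complex poly poly poly) \<Rightarrow> celt1 \<Rightarrow> celt2" where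
  "map2 f u = (f (fst u), f (snd u))"

text \<open>(x_v y)_{lam+mu} z where v (= lamT or muT) is the variable attached to x:
  if x_v y = sum_j v^j z_j, this is sum_j v^j (z_j)_{lam+mu} z\<close>
definition comp_prod :: "(celt \<Rightarrow> celt \<Rightarrow> celt1) \<Rightarrow> complex poly poly poly \<Rightarrow> celt \<Rightarrow> celt \<Rightarrow> celt \<Rightarrow> celt2" where
  "comp_prod pr v x y z =
     (\<Sum>j\<le>deg1 (pr x y). sc2 (v ^ j) (map2 toLM (pr (coef1 (pr x y) j) z)))"

text \<open>x_{vx}(y_{vy} z): if y_{vy} z = sum_k vy^k w_k, this is sum_k vy^k x_{vx} w_k,
  where ex embeds the product x_{vx} w_k into the variable vx\<close>
definition nest_prod :: "(celt \<Rightarrow> celt \<Rightarrow> celt1) \<Rightarrow> (complex poly poly \<Rightarrow> complex poly poly poly)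
    \<Rightarrow> complex poly poly poly \<Rightarrow> celt \<Rightarrow> celt \<Rightarrow> celt \<Rightarrow> celt2" where
  "nest_prod pr ex vy x y z =
     (\<Sum>k\<le>deg1 (pr y z). sc2 (vy ^ k) (map2 ex (pr x (coef1 (pr y z) k))))"

text \<open>(x_lam y)_{lam+mu} z - x_lam (y_mu z) = (y_mu x)_{lam+mu} z - y_mu (x_lam z)\<close>
definition left_symmetric :: "(celt \<Rightarrow> celt \<Rightarrow> celt1) \<Rightarrow> bool" where
  "left_symmetric pr \<longleftrightarrow>
     (\<forall>x y z. comp_prod pr lamT x y z - nest_prod pr toL muT x y z =
              comp_prod pr muT y x z - nest_prod pr toM lamT y x z)"

text \<open>sesquilinear extension of values on the basis L, W:
  (p(d)L + q(d)W)_lam (r(d)L + s(d)W) = p(-lam) r(d+lam) L_lam L + ...\<close>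
definition negv :: "complex poly \<Rightarrow> complex poly poly" where
  "negv p = pcompose (map_poly (\<lambda>c. [:c:]) p) (- lam1)"
definition shiftv :: "complex poly \<Rightarrow> complex poly poly" where
  "shiftv r = pcompose (map_poly (\<lambda>c. [:c:]) r) (del1 + lam1)"
definition sesq_ext :: "celt1 \<Rightarrow> celt1 \<Rightarrow> celt1 \<Rightarrow> celt1 \<Rightarrow> celt \<Rightarrow> celt \<Rightarrow> celt1" where
  "sesq_ext LL LW WL WW x y =
     sc1 (negv (fst x) * shiftv (fst y)) LL + sc1 (negv (fst x) * shiftv (snd y)) LW +
     sc1 (negv (snd x) * shiftv (fst y)) WL + sc1 (negv (snd x) * shiftv (snd y)) WW"

text \<open>Lie conformal bracket of W(a,b); [W_lam L] = -[L_{-lam-d} W] by skew-symmetry\<close>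
definition LW_ab :: "complex \<Rightarrow> complex \<Rightarrow> celt1" where
  "LW_ab a b = (0, del1 + cst1 a * lam1 + cst1 b)"
definition bracketW :: "complex \<Rightarrow> complex \<Rightarrow> celt \<Rightarrow> celt \<Rightarrow> celt1" where
  "bracketW a b = sesq_ext (del1 + cst1 2 * lam1, 0) (LW_ab a b) (- subst_neg (LW_ab a b)) (0, 0)"

definition compatible_with :: "(celt \<Rightarrow> celt \<Rightarrow> celt1) \<Rightarrow> (celt \<Rightarrow> celt \<Rightarrow> celt1) \<Rightarrow> bool" where
  "compatible_with br pr \<longleftrightarrow> (\<forall>x y. pr x y - subst_neg (pr y x) = br x y)"

definition exactly_one3 :: "bool \<Rightarrow> bool \<Rightarrow> bool \<Rightarrow> bool" where
  "exactly_one3 P Q R \<longleftrightarrow> (P \<and> \<not> Q \<and> \<not> R) \<or> (\<not> P \<and> Q \<and> \<not> R) \<or> (\<not> P \<and> \<not> Q \<and> R)"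

end

theory Submission imports Defs
begin

definition ev2 :: "complex poly poly \<Rightarrow> complex \<Rightarrow> complex \<Rightarrow> complex" where
  "ev2 P l d = poly (poly P [:l:]) d"
definition ev3 :: "complex poly poly poly \<Rightarrow> complex \<Rightarrow> complex \<Rightarrow> complex \<Rightarrow> complex" where
  "ev3 T l m d = poly (poly (poly T [:[:l:]:]) [:m:]) d"

lemma poly_poly_eval: "poly (poly P X) d = poly (map_poly (\<lambda>q. poly q d) P) (poly X d)"
  by (induction P) (auto simp: map_poly_pCons)

lemma ev2_alt: "ev2 P l d = poly (map_poly (\<lambda>q. poly q d) P) l"
  unfolding ev2_def by (simp add: poly_poly_eval)

lemma ev2_simps [simp]:
  "ev2 (P + Q) l d = ev2 P l d + ev2 Q l d"
  "ev2 (P - Q) l d = ev2 P l d - ev2 Q l d"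
  "ev2 (P * Q) l d = ev2 P l d * ev2 Q l d"
  "ev2 (- P) l d = - ev2 P l d"
  "ev2 0 l d = 0" "ev2 1 l d = 1"
  "ev2 (P ^ j) l d = ev2 P l d ^ j"
  "ev2 lam1 l d = l" "ev2 del1 l d = d" "ev2 (cst1 c) l d = c"
  by (simp_all add: ev2_def lam1_def del1_def cst1_def poly_power)

lemma ev3_simps [simp]:
  "ev3 (P + Q) l m d = ev3 P l m d + ev3 Q l m d"
  "ev3 (P - Q) l m d = ev3 P l m d - ev3 Q l m d"
  "ev3 (P * Q) l m d = ev3 P l m d * ev3 Q l m d"
  "ev3 (- P) l m d = - ev3 P l m d"
  "ev3 0 l m d = 0"
  "ev3 (P ^ j) l m d = ev3 P l m d ^ j"
  "ev3 lamT l m d = l" "ev3 muT l m d = m"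
  "ev3 (sum f A) l m d = (\<Sum>x\<in>A. ev3 (f x) l m d)"
  by (simp_all add: ev3_def lamT_def muT_def poly_power poly_sum)

lemma ev2_sum [simp]: "ev2 (sum f A) l d = (\<Sum>x\<in>A. ev2 (f x) l d)"
  by (simp add: ev2_def poly_sum)

lemma poly_map_const: "poly (map_poly (\<lambda>c. [:c:]) p) [:x:] = [:poly p x:]"
  by (simp add: pcompose_altdef[symmetric] pcompose_pCons_0)

lemma ev2_negv [simp]: "ev2 (negv p) l d = poly p (- l)"
  by (simp add: ev2_def negv_def poly_pcompose lam1_def poly_map_const)

lemma ev2_shiftv [simp]: "ev2 (shiftv r) l d = poly r (d + l)"
proof -
  have "poly (shiftv r) [:l:] = pcompose r [:l, 1:]"
    by (simp add: shiftv_def poly_pcompose lam1_def del1_def pcompose_altdef[symmetric])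
  then show ?thesis by (simp add: ev2_def poly_pcompose add.commute)
qed

lemma ev2_pcomp_neg: "ev2 (pcompose P (- lam1 - del1)) l d = ev2 P (- l - d) d"
proof -
  have "poly (pcompose P (- lam1 - del1)) [:l:] = poly P [:- l, -1:]"
    by (simp add: poly_pcompose lam1_def del1_def)
  then show ?thesis unfolding ev2_def by (simp add: poly_poly_eval)
qed

lemma ev3_toL [simp]: "ev3 (toL P) l m d = ev2 P l d"
  by (simp add: ev3_def ev2_def toL_def pcompose_altdef[symmetric] pcompose_pCons_0)

lemma ev3_toM [simp]: "ev3 (toM P) l m d = ev2 P m d"
  by (simp add: ev3_def ev2_def toM_def)

lemma ev3_toLM [simp]: "ev3 (toLM P) l m d = ev2 P (l + m) d"
proof -
  have "poly (toLM P) [:[:l:]:] = pcompose P [:[:l:], 1:]"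
    by (simp add: toLM_def toL_def poly_pcompose lamT_def muT_def pcompose_altdef[symmetric])
  then show ?thesis by (simp add: ev3_def ev2_def poly_pcompose)
qed


lemma sc1_add: "sc1 (f + g) u = sc1 f u + sc1 g u"
  by (simp add: sc1_def algebra_simps)
lemma sc1_sc1: "sc1 f (sc1 g u) = sc1 (f * g) u"
  by (simp add: sc1_def algebra_simps)
lemma sc1_0: "sc1 0 u = 0"
  by (simp add: sc1_def zero_prod_def)

lemma negv_pCons: "negv (pCons a p) = cst1 a + (- lam1) * negv p"
  by (simp add: negv_def map_poly_pCons pcompose_pCons cst1_def)
lemma shiftv_pCons: "shiftv (pCons a p) = cst1 a + (del1 + lam1) * shiftv p"
  by (simp add: shiftv_def map_poly_pCons pcompose_pCons cst1_def)

lemma pCons_split: "(pCons a p :: complex poly) = [:a:] + [:0, 1:] * p"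
  by simp

context
  fixes pr :: "celt \<Rightarrow> celt \<Rightarrow> celt1"
  assumes conf: "is_conformal_product pr"
begin

lemma cf1: "pr (x + y) z = pr x z + pr y z" using conf unfolding is_conformal_product_def by blast
lemma cf2: "pr x (y + z) = pr x y + pr x z" using conf unfolding is_conformal_product_def by blast
lemma cf3: "pr (smR c x) y = sc1 (cst1 c) (pr x y)" using conf unfolding is_conformal_product_def by blast
lemma cf4: "pr x (smR c y) = sc1 (cst1 c) (pr x y)" using conf unfolding is_conformal_product_def by blast
lemma cf5: "pr (dR x) y = sc1 (- lam1) (pr x y)" using conf unfolding is_conformal_product_def by blast
lemma cf6: "pr x (dR y) = sc1 (del1 + lam1) (pr x y)" using conf unfolding is_conformal_product_def by blast

lemma pr_zero_left: "pr 0 z = 0"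
proof -
  have "pr (0 + 0) z = pr 0 z + pr 0 z" using conf unfolding is_conformal_product_def by blast
  then show ?thesis by simp
qed

lemma pr_zero_right: "pr z 0 = 0"
proof -
  have "pr z (0 + 0) = pr z 0 + pr z 0" using conf unfolding is_conformal_product_def by blast
  then show ?thesis by simp
qed

lemma pr_L_left: "pr (p, 0) z = sc1 (negv p) (pr eL z)"
proof (induction p)
  case 0
  then show ?case using pr_zero_left by (simp add: negv_def sc1_0 zero_prod_def)
next
  case (pCons a p)
  have e: "(pCons a p, 0::complex poly) = smR a eL + dR (p, 0)"
    by (simp add: smR_def eL_def dR_def)
  have "pr (pCons a p, 0) z = pr (smR a eL) z + pr (dR (p, 0)) z"
    unfolding e by (simp add: cf1 cf2)
  also have "\<dots> = sc1 (cst1 a) (pr eL z) + sc1 (- lam1) (pr (p, 0) z)"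
    by (simp add: cf3 cf4 cf5 cf6)
  also have "\<dots> = sc1 (negv (pCons a p)) (pr eL z)"
    by (simp add: pCons.IH sc1_sc1 negv_pCons sc1_def algebra_simps)
  finally show ?case .
qed

lemma pr_W_left: "pr (0, q) z = sc1 (negv q) (pr eW z)"
proof (induction q)
  case 0
  then show ?case using pr_zero_left by (simp add: negv_def sc1_0 zero_prod_def)
next
  case (pCons a p)
  have e: "(0::complex poly, pCons a p) = smR a eW + dR (0, p)"
    by (simp add: smR_def eW_def dR_def)
  have "pr (0, pCons a p) z = pr (smR a eW) z + pr (dR (0, p)) z"
    unfolding e by (simp add: cf1 cf2)
  also have "\<dots> = sc1 (cst1 a) (pr eW z) + sc1 (- lam1) (pr (0, p) z)"
    by (simp add: cf3 cf4 cf5 cf6)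
  also have "\<dots> = sc1 (negv (pCons a p)) (pr eW z)"
    by (simp add: pCons.IH sc1_sc1 negv_pCons sc1_def algebra_simps)
  finally show ?case .
qed

lemma pr_left: "pr x z = sc1 (negv (fst x)) (pr eL z) + sc1 (negv (snd x)) (pr eW z)"
proof -
  have "x = (fst x, 0) + (0, snd x)" by simp
  then have "pr x z = pr (fst x, 0) z + pr (0, snd x) z"
    by (metis cf1 cf2)
  then show ?thesis by (simp add: pr_L_left pr_W_left)
qed

lemma pr_L_right: "pr z (p, 0) = sc1 (shiftv p) (pr z eL)"
proof (induction p)
  case 0
  then show ?case using pr_zero_right by (simp add: shiftv_def sc1_0 zero_prod_def)
next
  case (pCons a p)
  have e: "(pCons a p, 0::complex poly) = smR a eL + dR (p, 0)"
    by (simp add: smR_def eL_def dR_def)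
  have "pr z (pCons a p, 0) = pr z (smR a eL) + pr z (dR (p, 0))"
    unfolding e by (simp add: cf1 cf2)
  also have "\<dots> = sc1 (cst1 a) (pr z eL) + sc1 (del1 + lam1) (pr z (p, 0))"
    by (simp add: cf3 cf4 cf5 cf6)
  also have "\<dots> = sc1 (shiftv (pCons a p)) (pr z eL)"
    by (simp add: pCons.IH sc1_sc1 shiftv_pCons sc1_add)
  finally show ?case .
qed

lemma pr_W_right: "pr z (0, p) = sc1 (shiftv p) (pr z eW)"
proof (induction p)
  case 0
  then show ?case using pr_zero_right by (simp add: shiftv_def sc1_0 zero_prod_def)
next
  case (pCons a p)
  have e: "(0::complex poly, pCons a p) = smR a eW + dR (0, p)"
    by (simp add: smR_def eW_def dR_def)
  have "pr z (0, pCons a p) = pr z (smR a eW) + pr z (dR (0, p))"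
    unfolding e by (simp add: cf1 cf2)
  also have "\<dots> = sc1 (cst1 a) (pr z eW) + sc1 (del1 + lam1) (pr z (0, p))"
    by (simp add: cf3 cf4 cf5 cf6)
  also have "\<dots> = sc1 (shiftv (pCons a p)) (pr z eW)"
    by (simp add: pCons.IH sc1_sc1 shiftv_pCons sc1_add)
  finally show ?case .
qed

lemma pr_right: "pr z x = sc1 (shiftv (fst x)) (pr z eL) + sc1 (shiftv (snd x)) (pr z eW)"
proof -
  have "x = (fst x, 0) + (0, snd x)" by simp
  then have "pr z x = pr z (fst x, 0) + pr z (0, snd x)"
    by (metis cf1 cf2)
  then show ?thesis by (simp add: pr_L_right pr_W_right)
qed

end


lemma poly_sum_le:
  fixes P :: "'a::comm_semiring_1 poly"
  assumes "degree P \<le> N" shows "poly P x = (\<Sum>i\<le>N. coeff P i * x ^ i)"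
proof -
  have "poly P x = (\<Sum>i\<le>degree P. coeff P i * x ^ i)" by (rule poly_altdef)
  also have "\<dots> = (\<Sum>i\<le>N. coeff P i * x ^ i)"
    by (rule sum.mono_neutral_left) (use assms in \<open>auto simp: coeff_eq_0\<close>)
  finally show ?thesis .
qed

lemma ev2_sum_coeff: "degree P \<le> N \<Longrightarrow> ev2 P l d = (\<Sum>j\<le>N. l ^ j * poly (coeff P j) d)"
  unfolding ev2_def by (simp add: poly_sum_le[of P N] poly_sum poly_power mult.commute)

lemma ev3_comp_snd:
  assumes conf: "is_conformal_product pr" and V: "ev3 v l m d = V"
  shows "ev3 (snd (comp_prod pr v x y z)) l m d =
     ev2 (fst (pr x y)) V (-(l+m)) * ev2 (snd (pr eL z)) (l+m) d +
     ev2 (snd (pr x y)) V (-(l+m)) * ev2 (snd (pr eW z)) (l+m) d"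
proof -
  let ?u = "pr x y" let ?N = "deg1 (pr x y)"
  have d1: "degree (fst ?u) \<le> ?N" and d2: "degree (snd ?u) \<le> ?N" by (auto simp: deg1_def)
  have "ev3 (snd (comp_prod pr v x y z)) l m d =
    (\<Sum>j\<le>?N. V ^ j * (poly (coeff (fst ?u) j) (-(l+m)) * ev2 (snd (pr eL z)) (l+m) d +
        poly (coeff (snd ?u) j) (-(l+m)) * ev2 (snd (pr eW z)) (l+m) d))"
  proof -
    have e: "ev2 (snd (pr (coef1 ?u j) z)) (l+m) d = poly (coeff (fst ?u) j) (-(l+m)) * ev2 (snd (pr eL z)) (l+m) d +
        poly (coeff (snd ?u) j) (-(l+m)) * ev2 (snd (pr eW z)) (l+m) d" for j
      by (subst pr_left[OF conf, of "coef1 ?u j"]) (simp add: sc1_def coef1_def)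
    show ?thesis unfolding comp_prod_def snd_sum
      by (simp add: V sc2_def map2_def e del: minus_add_distrib)
  qed
  also have "\<dots> = ev2 (fst ?u) V (-(l+m)) * ev2 (snd (pr eL z)) (l+m) d +
     ev2 (snd ?u) V (-(l+m)) * ev2 (snd (pr eW z)) (l+m) d"
    by (simp add: ev2_sum_coeff[OF d1] ev2_sum_coeff[OF d2] sum_distrib_left sum.distrib distrib_left mult_ac)
  finally show ?thesis .
qed

lemma ev3_nest_snd:
  assumes conf: "is_conformal_product pr" and V: "ev3 vy l m d = Y"
    and E: "\<And>P. ev3 (ex P) l m d = ev2 P X d"
  shows "ev3 (snd (nest_prod pr ex vy x y z)) l m d =
     ev2 (fst (pr y z)) Y (d + X) * ev2 (snd (pr x eL)) X d +
     ev2 (snd (pr y z)) Y (d + X) * ev2 (snd (pr x eW)) X d"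
proof -
  let ?u = "pr y z" let ?N = "deg1 (pr y z)"
  have d1: "degree (fst ?u) \<le> ?N" and d2: "degree (snd ?u) \<le> ?N" by (auto simp: deg1_def)
  have "ev3 (snd (nest_prod pr ex vy x y z)) l m d =
    (\<Sum>j\<le>?N. Y ^ j * (poly (coeff (fst ?u) j) (d + X) * ev2 (snd (pr x eL)) X d +
        poly (coeff (snd ?u) j) (d + X) * ev2 (snd (pr x eW)) X d))"
  proof -
    have e: "ev2 (snd (pr x (coef1 ?u j))) X d = poly (coeff (fst ?u) j) (d + X) * ev2 (snd (pr x eL)) X d +
        poly (coeff (snd ?u) j) (d + X) * ev2 (snd (pr x eW)) X d" for j
      by (subst pr_right[OF conf, of x "coef1 ?u j"]) (simp add: sc1_def coef1_def)
    show ?thesis unfolding nest_prod_def snd_sum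
      by (simp add: V E sc2_def map2_def e)
  qed
  also have "\<dots> = ev2 (fst ?u) Y (d + X) * ev2 (snd (pr x eL)) X d +
     ev2 (snd ?u) Y (d + X) * ev2 (snd (pr x eW)) X d"
    by (simp add: ev2_sum_coeff[OF d1] ev2_sum_coeff[OF d2] sum_distrib_left sum.distrib distrib_left mult_ac)
  finally show ?thesis .
qed


lemma ev2_inj:
  assumes "\<And>l d. ev2 P l d = ev2 Q l d" shows "P = Q"
proof -
  let ?R = "P - Q"
  have z: "ev2 ?R l d = 0" for l d using assms by simp
  have "map_poly (\<lambda>q. poly q d) ?R = 0" for d
    using z by (simp add: ev2_alt poly_all_0_iff_0[symmetric] del: ev2_simps)
  then have "poly (coeff ?R i) d = 0" for i d
    by (metis coeff_0 coeff_map_poly poly_0)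
  then have "coeff ?R i = 0" for i
    by (simp add: poly_all_0_iff_0[symmetric])
  then have "?R = 0" by (simp add: poly_eqI)
  then show ?thesis by simp
qed

lemma coeff_shift:
  fixes p :: "complex poly"
  shows "degree p \<le> Suc k \<Longrightarrow> coeff (pcompose p [:s, 1:]) (Suc k) = coeff p (Suc k) \<and>
     coeff (pcompose p [:s, 1:]) k = coeff p k + of_nat (Suc k) * s * coeff p (Suc k)"
proof (induction p arbitrary: k)
  case 0
  then show ?case by simp
next
  case (pCons a p)
  have dp: "degree p \<le> k" using pCons.prems pCons.hyps by (auto split: if_splits)
  have dq: "degree (pcompose p [:s, 1:]) \<le> k" using dp by (simp add: degree_pcompose)
  have c1: "coeff (pcompose p [:s, 1:]) (Suc k) = 0" using dq by (simp add: coeff_eq_0)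
  show ?case
  proof (cases k)
    case 0
    then have "degree p = 0" using dp by simp
    then obtain c where pc: "p = [:c:]" by (metis degree_eq_zeroE)
    show ?thesis using 0 by (simp add: pc pcompose_pCons)
  next
    case (Suc j)
    have IH: "coeff (pcompose p [:s, 1:]) (Suc j) = coeff p (Suc j) \<and>
     coeff (pcompose p [:s, 1:]) j = coeff p j + of_nat (Suc j) * s * coeff p (Suc j)"
      using pCons.IH[of j] dp Suc by simp
    show ?thesis using IH c1 Suc
      by (simp add: pcompose_pCons algebra_simps)
  qed
qed


lemma core:
  fixes h :: "complex poly poly" and G :: "complex \<Rightarrow> complex \<Rightarrow> complex" and a b c :: complex
  assumes LS: "\<And>l m d. ev2 h l (-(l+m)) * ev2 h (l+m) d - (d+l+m+c) * ev2 h l d =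
                   G m (-(l+m)) * ev2 h (l+m) d - ev2 h l (d+m) * G m d"
    and C: "\<And>l d. G l d - ev2 h (-l-d) d = d + a*l + b"
  shows "h = 0 \<or> (c \<noteq> 0 \<and> (\<forall>l d. ev2 h l d = c)) \<or> (\<forall>l d. ev2 h l d = l + d + c)"
proof -
  define H where "H = ev2 h"
  have S1: "H l u * H (-u) d = (-l+(a-1)*(u-d)+b) * H (l+u-d) d - (d + a*(u-d) + b) * H l u
            + (l+u+c) * H l d" for l u d
  proof -
    have e1: "H l (-(l+(u-d))) * H (l+(u-d)) d - (d+l+(u-d)+c) * H l d =
       G (u-d) (-(l+(u-d))) * H (l+(u-d)) d - H l (d+(u-d)) * G (u-d) d"
      using LS unfolding H_def by blast
    have a1: "d + (u-d) = u" "l+(u-d) = l+u-d" "-(u-d) - -(l+(u-d)) = l" "-(u-d)-d = -u"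
      by simp_all
    have e2: "G (u-d) (-(l+(u-d))) - H l (-(l+(u-d))) = -(l+(u-d)) + a*(u-d) + b"
      using C[of "u-d" "-(l+(u-d))"] unfolding a1(3) H_def .
    have e3: "G (u-d) d - H (-u) d = d + a*(u-d) + b"
      using C[of "u-d" d] unfolding a1(4) H_def .
    show ?thesis using e1 e2 e3 unfolding a1(1) a1(2) by algebra
  qed
  have S2: "H l u * (H (-u) u - c) = 0" for l u
    using S1[of l u u] by (simp add: algebra_simps)
  show ?thesis
  proof (cases "h = 0")
    case True then show ?thesis by simp
  next
    case hnz: False
    define n where "n = degree h"
    define hn where "hn = coeff h n"
    have hn0: "hn \<noteq> 0" using hnz by (simp add: hn_def n_def)
    define Hd where "Hd d = map_poly (\<lambda>q. poly q d) h" for d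
    have pHd: "poly (Hd d) l = H l d" for l d by (simp add: Hd_def H_def ev2_alt)
    have cHd: "coeff (Hd d) i = poly (coeff h i) d" for d i by (simp add: Hd_def coeff_map_poly)
    have dHd: "degree (Hd d) \<le> n" for d by (simp add: Hd_def n_def map_poly_degree_leq)
    define Q where "Q = poly h [:0, -1:]"
    have pQ: "poly Q u = H (-u) u" for u
      by (simp add: Q_def H_def poly_poly_eval ev2_alt)
    have S4: "H (-u) u = c" for u
    proof -
      have "poly (hn * (Q - [:c:])) x = 0" for x
      proof (cases "poly hn x = 0")
        case True then show ?thesis by simp
      next
        case False
        then have "coeff (Hd x) n \<noteq> 0" by (simp add: cHd hn_def)
        then have "Hd x \<noteq> 0" by auto
        then obtain l where "poly (Hd x) l \<noteq> 0" using poly_all_0_iff_0 by blast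
        then have "H l x \<noteq> 0" by (simp add: pHd)
        then have "H (-x) x = c" using S2[of l x] by simp
        then show ?thesis by (simp add: pQ)
      qed
      then have "hn * (Q - [:c:]) = 0" using poly_all_0_iff_0 by blast
      then have "Q = [:c:]" using hn0 by simp
      then show ?thesis using pQ[of u] by simp
    qed
    have S5: "poly hn u * (H (-u) d + d + a*(u-d) + b) = poly hn d * ((a-1-of_nat n)*(u-d) + b + u + c)"
      if n1: "n \<ge> 1" for u d
    proof -
      obtain k where nk: "n = Suc k" using n1 by (cases n) auto
      have id: "Hd u * [:H (-u) d + d + a*(u-d) + b:] =
          [:(a-1)*(u-d)+b, -1:] * pcompose (Hd d) [:u-d, 1:] + [:u+c, 1:] * Hd d"
      proof (rule poly_ext)
        fix l
        have "l + u - d = u - d + l" by simp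
        then show "poly (Hd u * [:H (-u) d + d + a*(u-d) + b:]) l =
          poly ([:(a-1)*(u-d)+b, -1:] * pcompose (Hd d) [:u-d, 1:] + [:u+c, 1:] * Hd d) l"
          using S1[of l u d] by (simp add: pHd poly_pcompose algebra_simps)
      qed
      have cs: "coeff (pcompose (Hd d) [:u-d, 1:]) (Suc k) = coeff (Hd d) (Suc k) \<and>
         coeff (pcompose (Hd d) [:u-d, 1:]) k = coeff (Hd d) k + of_nat (Suc k) * (u-d) * coeff (Hd d) (Suc k)"
        using coeff_shift dHd nk by metis
      have "coeff (Hd u * [:H (-u) d + d + a*(u-d) + b:]) (Suc k) =
         coeff ([:(a-1)*(u-d)+b, -1:] * pcompose (Hd d) [:u-d, 1:] + [:u+c, 1:] * Hd d) (Suc k)"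
        by (simp only: id)
      then show ?thesis using cs by (simp add: cHd hn_def nk algebra_simps)
    qed
    define F where "F d0 = pcompose (Hd d0) [:0, -1:] + [:(1-a)*d0 + b, a:]" for d0
    have pF: "poly (F d0) u = H (-u) d0 + d0 + a*(u-d0) + b" for d0 u
      by (simp add: F_def poly_pcompose pHd algebra_simps)
    have idF: "hn * F d0 = [:poly hn d0 * (b + c - (a-1-of_nat n)*d0), poly hn d0 * (a - of_nat n):]"
      if n1: "n \<ge> 1" for d0
    proof (rule poly_ext)
      fix u
      show "poly (hn * F d0) u = poly [:poly hn d0 * (b + c - (a-1-of_nat n)*d0), poly hn d0 * (a - of_nat n):] u"
        using S5[OF n1, of u d0] by (simp add: pF algebra_simps)
    qed
    have dF: "degree (hn * F d0) \<le> 1" if n1: "n \<ge> 1" for d0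
      unfolding idF[OF n1] by simp
    have cF1: "coeff (F d0) 1 = a - poly (coeff h 1) d0" for d0
      by (simp add: F_def coeff_pcompose_linear cHd)
    have S6: "n \<le> 1"
    proof (rule ccontr)
      assume "\<not> n \<le> 1"
      then have n2: "n \<ge> 2" by simp
      obtain d0 where d0: "poly hn d0 \<noteq> 0" using hn0 poly_all_0_iff_0 by blast
      have "coeff (Hd d0) n \<noteq> 0" using d0 by (simp add: cHd hn_def)
      then have "degree (Hd d0) = n" using dHd[of d0] le_degree by (meson le_antisym)
      then have dp: "degree (pcompose (Hd d0) [:0, -1:]) = n" by (simp add: degree_pcompose)
      have "degree [:(1-a)*d0 + b, a:] < degree (pcompose (Hd d0) [:0, -1:])"
        using n2 dp by simp
      then have "degree (F d0) = n" unfolding F_def using dp degree_add_eq_left by metis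
      then have "F d0 \<noteq> 0" using n2 by auto
      then have "degree (hn * F d0) = degree hn + n" using hn0 degree_mult_eq \<open>degree (F d0) = n\<close> by metis
      then show False using dF[of d0] n2 by simp
    qed
    have S7: "degree hn = 0" if n1: "n = 1"
    proof (rule ccontr)
      assume dh: "degree hn \<noteq> 0"
      then have "hn - [:a:] \<noteq> 0" by auto
      then have "hn * (hn - [:a:]) \<noteq> 0" using hn0 by simp
      then obtain d0 where d0: "poly (hn * (hn - [:a:])) d0 \<noteq> 0" using poly_all_0_iff_0 by blast
      then have "coeff (F d0) 1 \<noteq> 0" using cF1[of d0] n1 by (auto simp: hn_def)
      then have Fnz: "F d0 \<noteq> 0" and "1 \<le> degree (F d0)" using le_degree by auto
      then have "degree (hn * F d0) \<ge> 2" using hn0 degree_mult_eq dh by (metis add_le_mono one_add_one le_iff_add not_one_le_zero One_nat_def Suc_leI neq0_conv)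
      then show False using dF[of d0] n1 by simp
    qed
    show ?thesis
    proof (cases "n = 0")
      case True
      have Hc: "H l d = poly (coeff h 0) d" for l d
        using ev2_sum_coeff[of h 0 l d] True by (simp add: H_def n_def)
      have Hall: "H l d = c" for l d using S4[of d] Hc by metis
      have "c \<noteq> 0"
      proof
        assume "c = 0"
        then have "h = 0" using Hall by (intro ev2_inj) (simp add: H_def)
        then show False using hnz by simp
      qed
      then show ?thesis using Hall by (simp add: H_def)
    next
      case False
      then have n1: "n = 1" using S6 by simp
      then have "degree hn = 0" using S7 by simp
      then obtain \<alpha> where al: "hn = [:\<alpha>:]" by (metis degree_eq_zeroE)
      have alnz: "\<alpha> \<noteq> 0" using hn0 al by simp
      have Hf: "H l d = poly (coeff h 0) d + l * \<alpha>" for l d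
        using ev2_sum_coeff[of h 1 l d] n1 al by (simp add: H_def n_def hn_def)
      have h0: "poly (coeff h 0) d = c + d * \<alpha>" for d using S4[of d] Hf[of "-d" d] by (simp add: algebra_simps)
      have "\<alpha> * (H 0 1 + 1 + a*(0-1) + b) = \<alpha> * ((a-1-1)*(0-1) + b + 0 + c)"
        using S5[of 0 1] n1 al by simp
      then have "H 0 1 + 1 + a*(0-1) + b = (a-1-1)*(0-1) + b + 0 + c" using alnz by simp
      then have "\<alpha> = 1" using Hf[of 0 1] h0[of 1] by (simp add: algebra_simps)
      then show ?thesis using Hf h0 by (simp add: H_def algebra_simps)
    qed
  qed
qed


theorem lemma3p1:
  fixes a b c :: complex and pr :: "celt \<Rightarrow> celt \<Rightarrow> celt1"
  assumes conf: "is_conformal_product pr"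
    and lsym: "left_symmetric pr"
    and compat: "compatible_with (bracketW a b) pr"
    and subalg: "snd (pr eL eL) = 0"
    and LL: "pr eL eL = (del1 + lam1 + cst1 c, 0)"
  shows "exactly_one3
     (snd (pr eL eW) = del1 + cst1 a * lam1 + cst1 b \<and> snd (pr eW eL) = 0)
     (snd (pr eL eW) = del1 + cst1 a * lam1 + cst1 b + cst1 c \<and> snd (pr eW eL) = cst1 c \<and> c \<noteq> 0)
     (snd (pr eL eW) = del1 + cst1 (a - 1) * lam1 + cst1 b + cst1 c \<and>
      snd (pr eW eL) = del1 + lam1 + cst1 c)"
proof -
  define h where "h = snd (pr eW eL)"
  define G where "G = ev2 (snd (pr eL eW))"
  have LS: "ev2 h l (-(l+m)) * ev2 h (l+m) d - (d+l+m+c) * ev2 h l d =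
            G m (-(l+m)) * ev2 h (l+m) d - ev2 h l (d+m) * G m d" for l m d
  proof -
    have eq: "comp_prod pr lamT eW eL eL - nest_prod pr toL muT eW eL eL =
              comp_prod pr muT eL eW eL - nest_prod pr toM lamT eL eW eL"
      using lsym unfolding left_symmetric_def by blast
    have "ev3 (snd (comp_prod pr lamT eW eL eL - nest_prod pr toL muT eW eL eL)) l m d =
          ev3 (snd (comp_prod pr muT eL eW eL - nest_prod pr toM lamT eL eW eL)) l m d"
      by (simp only: eq)
    then show ?thesis
      by (simp add: ev3_comp_snd[OF conf] ev3_nest_snd[OF conf] LL h_def G_def algebra_simps)
  qed
  have C: "G l d - ev2 h (-l-d) d = d + a*l + b" for l d
  proof -
    have eq: "pr eL eW - subst_neg (pr eW eL) = bracketW a b eL eW"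
      using compat unfolding compatible_with_def by blast
    have "ev2 (snd (pr eL eW - subst_neg (pr eW eL))) l d = ev2 (snd (bracketW a b eL eW)) l d"
      by (simp only: eq)
    then show ?thesis
      by (simp add: subst_neg_def ev2_pcomp_neg h_def G_def bracketW_def sesq_ext_def sc1_def
          eL_def eW_def LW_ab_def)
  qed
  have Gf: "G l d = d + a*l + b + ev2 h (-l-d) d" for l d using C[of l d] by (simp add: algebra_simps)
  have Gev: "snd (pr eL eW) = X" if "\<And>l d. G l d = ev2 X l d" for X
    using that unfolding G_def by (intro ev2_inj) simp
  have hev: "h = X" if "\<And>l d. ev2 h l d = ev2 X l d" for X
    using that by (intro ev2_inj) simp
  have ne1: "del1 + lam1 + cst1 c \<noteq> cst1 c"
  proof
    assume e: "del1 + lam1 + cst1 c = cst1 c"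
    have "ev2 (del1 + lam1 + cst1 c) 1 0 = ev2 (cst1 c) 1 0" by (simp only: e)
    then show False by simp
  qed
  have ne2: "del1 + lam1 + cst1 c \<noteq> 0"
  proof
    assume e: "del1 + lam1 + cst1 c = 0"
    have "ev2 (del1 + lam1 + cst1 c) 1 0 = ev2 0 1 0" "ev2 (del1 + lam1 + cst1 c) 0 0 = ev2 0 0 0"
      by (simp_all only: e)
    then show False by simp
  qed
  have ne3: "cst1 c = 0 \<longleftrightarrow> c = 0" by (simp add: cst1_def)
  from core[OF LS C] consider "h = 0" | "c \<noteq> 0" "\<forall>l d. ev2 h l d = c" | "\<forall>l d. ev2 h l d = l + d + c"
    by blast
  then show ?thesis
  proof cases
    case 1
    have g: "snd (pr eL eW) = del1 + cst1 a * lam1 + cst1 b" by (rule Gev) (simp add: Gf 1)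
    have hz: "snd (pr eW eL) = 0" using 1 by (simp add: h_def)
    have nc: "\<not> (0 = cst1 c \<and> c \<noteq> 0)" using ne3 by metis
    have nd: "0 \<noteq> del1 + lam1 + cst1 c" using ne2 by metis
    show ?thesis unfolding exactly_one3_def hz using g nc nd by blast
  next
    case 2
    have hh: "h = cst1 c" by (rule hev) (simp add: 2)
    have g: "snd (pr eL eW) = del1 + cst1 a * lam1 + cst1 b + cst1 c" by (rule Gev) (simp add: Gf 2)
    have hz: "snd (pr eW eL) = cst1 c" using hh by (simp add: h_def)
    have nc: "cst1 c \<noteq> 0" using ne3 2 by metis
    have nd: "cst1 c \<noteq> del1 + lam1 + cst1 c" using ne1 by metis
    show ?thesis unfolding exactly_one3_def hz using g nc nd 2(1) by blast
  next
    case 3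
    have hh: "h = del1 + lam1 + cst1 c" by (rule hev) (simp add: 3)
    have g: "snd (pr eL eW) = del1 + cst1 (a - 1) * lam1 + cst1 b + cst1 c" by (rule Gev) (simp add: Gf 3 algebra_simps)
    have hz: "snd (pr eW eL) = del1 + lam1 + cst1 c" using hh by (simp add: h_def)
    show ?thesis unfolding exactly_one3_def hz using g ne1 ne2 by metis
  qed
qed

end
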